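(* Let $\varphi=\frac{1+\sqrt5}{2}$ and, for every integer $k$, let $F_k=\frac{\varphi^k-(-1/\varphi)^k}{\varphi+1/\varphi}$ (so $F_0=0$, $F_1=F_2=1$, $F_{k}=F_{k-1}+F_{k-2}$). Let $b$, $b^+$, $N$ be linear operators on a complex inner product space, with $b^+$ the adjoint of $b$ and $N$ hermitian, satisfying $$bb^+-\varphi\, b^+b=\left(-\tfrac1\varphi\right)^N,\qquad [N,b^+]=b^+,\qquad [N,b]=-b,$$ where $\left(-\frac1\varphi\right)^N$ acts on any eigenvector of $N$ with eigenvalue $k$ as multiplication by $\left(-\frac1\varphi\right)^k$. Suppose there is a vacuum vector $|0\rangle$ with $\langle 0|0\rangle=1$, $b|0\rangle=0$ and $N|0\rangle=0$. For $n\ge 0$ set $|n\rangle=\frac{(b^+)^n}{\sqrt{F_1F_2\cdots F_n}}|0\rangle$. Then for every $n\ge0$: $N|n\rangle=n|n\rangle$, $b^+b|n\rangle=F_n|n\rangle$, $bb^+|n\rangle=F_{n+1}|n\rangle$, the vectors $|n\rangle$ are orthonormal, and the Hamiltonian $H=\frac{\hbar\omega}{2}(b^+b+bb^+)$ satisfies $H|n\rangle=E_n|n\rangle$ with $$E_n=\frac{\hbar\omega}{2}F_{n+2}.$$ In particular $E_{n+1}-E_n=\frac{\hbar\omega}{2}F_{n+1}$ and $\lim_{n\to\infty}E_{n+1}/E_n=\varphi$.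
   Context: $\hbar>0$ and $\omega>0$ are constants. The empty product $F_1\cdots F_0$ equals $1$. *)

theory Defs
  imports Complex_Main
begin

definition phi :: real where
  "phi = (1 + sqrt 5) / 2"

definition Fib :: "int \<Rightarrow> real" where
  "Fib k = (phi powi k - (- 1 / phi) powi k) / (phi + 1 / phi)"

text \<open>A complex inner product space: a complex vector space with scalar multiplication
  sc and an inner product ip, antilinear in the first and linear in the second argument
  (physics convention, matching bra-ket notation).\<close>
definition complex_inner_space ::
  "(complex \<Rightarrow> 'v::ab_group_add \<Rightarrow> 'v) \<Rightarrow> ('v \<Rightarrow> 'v \<Rightarrow> complex) \<Rightarrow> bool" where
  "complex_inner_space sc ip \<longleftrightarrow>
     vector_space sc \<and>
     (\<forall>x y. ip y x = cnj (ip x y)) \<and>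
     (\<forall>x y z. ip x (y + z) = ip x y + ip x z) \<and>
     (\<forall>c x y. ip x (sc c y) = c * ip x y) \<and>
     (\<forall>x. Re (ip x x) \<ge> 0) \<and>
     (\<forall>x. ip x x = 0 \<longrightarrow> x = 0)"

end

theory Submission imports Defs begin
lemma phi_pos: "phi > 0" unfolding phi_def by (simp add: add_pos_nonneg)
lemma phi_sq: "phi^2 = phi + 1" unfolding phi_def by (simp add: power2_eq_square field_simps)
definition psi :: real where "psi = -1/phi"
lemma psi_sq: "psi^2 = psi + 1" using phi_sq phi_pos unfolding psi_def
  by (simp add: power2_eq_square field_simps)
lemma den_pos: "phi + 1/phi > 0" using phi_pos by (simp add: add_pos_pos)
lemma Fib_nat: "Fib (int n) = (phi^n - psi^n)/(phi + 1/phi)"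
  unfolding Fib_def psi_def by (simp add: power_int_of_nat)
lemma Fib_nat1: "Fib (int n + 1) = (phi^(n+1) - psi^(n+1))/(phi + 1/phi)"
  using Fib_nat[of "n+1"] by (simp add: ac_simps)
lemma Fib_nat2: "Fib (int n + 2) = (phi^(n+2) - psi^(n+2))/(phi + 1/phi)"
  using Fib_nat[of "n+2"] by (simp add: ac_simps)
lemma Fib_rec: "Fib (int n + 2) = Fib (int n + 1) + Fib (int n)"
proof -
  have "phi^(n+2) = phi^n * phi^2" by (simp only: power_add)
  also have "\<dots> = phi^(n+1) + phi^n" using phi_sq by (simp add: algebra_simps power2_eq_square)
  finally have 1: "phi^(n+2) = phi^(n+1) + phi^n" .
  have "psi^(n+2) = psi^n * psi^2" by (simp only: power_add)
  also have "\<dots> = psi^(n+1) + psi^n" using psi_sq by (simp add: algebra_simps power2_eq_square)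
  finally have 2: "psi^(n+2) = psi^(n+1) + psi^n" .
  show ?thesis unfolding Fib_nat Fib_nat1 Fib_nat2 1 2 by (simp add: add_divide_distrib[symmetric] diff_divide_distrib[symmetric])
qed
lemma Fib_step: "Fib (int n + 1) = phi * Fib (int n) + psi^n"
proof -
  have d: "phi + 1/phi \<noteq> 0" using den_pos by simp
  have "phi * (phi^n - psi^n) + psi^n * (phi + 1/phi) = phi^(n+1) - psi^(n+1)"
    unfolding psi_def using phi_pos by (simp add: field_simps)
  thus ?thesis unfolding Fib_nat Fib_nat1 using d
    by (simp add: field_simps)
qed
lemma Fib0: "Fib 0 = 0" unfolding Fib_def by simp
lemma Fib1: "Fib 1 = 1" unfolding Fib_def using den_pos by simp
lemma Fib_pos: "n \<ge> 1 \<Longrightarrow> Fib (int n) > 0"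
proof (induction n rule: nat_less_induct)
  case (1 n)
  show ?case
  proof (cases "n \<le> 2")
    case True
    then have "n = 1 \<or> n = 2" using 1(2) by auto
    then show ?thesis using Fib1 Fib_rec[of 0] Fib0 by auto
  next
    case False
    define m where "m = n - 2"
    have m: "n = m + 2" "m \<ge> 1" using False unfolding m_def by auto
    have "Fib (int m + 2) = Fib (int m + 1) + Fib (int m)" by (rule Fib_rec)
    moreover have "Fib (int (m+1)) > 0" using 1 m by auto
    moreover have "Fib (int m) > 0" using 1 m by auto
    ultimately have "Fib (int m + 2) > 0" by (simp add: ac_simps)
    moreover have "int n = int m + 2" using m by simp
    ultimately show ?thesis by simp
  qed
qed
lemma ratio_lim: "(\<lambda>n. Fib (int n + 1) / Fib (int n)) \<longlonglongrightarrow> phi"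
proof -
  define r where "r = psi/phi"
  have r: "\<bar>r\<bar> < 1" unfolding r_def psi_def using phi_pos phi_sq
    by (simp add: field_simps abs_if power2_eq_square)
  have r0: "(\<lambda>n. r^n) \<longlonglongrightarrow> 0" using r by (simp add: LIMSEQ_power_zero)
  have lim: "(\<lambda>n. (phi - psi * r^n) / (1 - r^n)) \<longlonglongrightarrow> (phi - psi * 0)/(1 - 0)"
    by (intro tendsto_intros r0) simp
  have ev: "eventually (\<lambda>n. (phi - psi * r^n) / (1 - r^n) = Fib (int n + 1) / Fib (int n)) sequentially"
    using eventually_ge_at_top[of 1]
  proof eventually_elim
    case (elim n)
    have F: "Fib (int n) > 0" using Fib_pos elim by simp
    have d: "phi + 1/phi \<noteq> 0" using den_pos by simp
    have pn: "phi^n > 0" using phi_pos by simp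
    have nz: "phi^n - psi^n \<noteq> 0" using F d unfolding Fib_nat by auto
    have e: "r^n = psi^n / phi^n" unfolding r_def by (simp add: power_divide)
    have "Fib (int n + 1) / Fib (int n) = (phi^(n+1) - psi^(n+1)) / (phi^n - psi^n)"
      unfolding Fib_nat Fib_nat1 using d by simp
    also have "\<dots> = (phi - psi * r^n) / (1 - r^n)"
      unfolding e using pn nz phi_pos by (simp add: field_simps)
    finally show ?case by simp
  qed
  show ?thesis using Lim_transform_eventually[OF lim ev] by simp
qed
theorem mainTheorem1:
  fixes sc :: "complex \<Rightarrow> 'v::ab_group_add \<Rightarrow> 'v"
    and ip :: "'v \<Rightarrow> 'v \<Rightarrow> complex"
    and b bp N Q :: "'v \<Rightarrow> 'v"
    and vac :: 'v
    and hbar \<omega> :: real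
  assumes inner: "complex_inner_space sc ip"
    and lin_b: "Vector_Spaces.linear sc sc b"
    and lin_bp: "Vector_Spaces.linear sc sc bp"
    and lin_N: "Vector_Spaces.linear sc sc N"
    and lin_Q: "Vector_Spaces.linear sc sc Q"
    and adj: "\<forall>x y. ip (b x) y = ip x (bp y)"
    and herm: "\<forall>x y. ip (N x) y = ip x (N y)"
    and Q_eig: "\<forall>(k::int) x. N x = sc (of_int k) x \<longrightarrow> Q x = sc (complex_of_real ((- 1 / phi) powi k)) x"
    and rel: "\<forall>x. b (bp x) - sc (complex_of_real phi) (bp (b x)) = Q x"
    and comm_bp: "\<forall>x. N (bp x) - bp (N x) = bp x"
    and comm_b: "\<forall>x. N (b x) - b (N x) = - b x"
    and vac_norm: "ip vac vac = 1"
    and vac_b: "b vac = 0"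
    and vac_N: "N vac = 0"
    and hbar_pos: "hbar > 0"
    and omega_pos: "\<omega> > 0"
  defines "ket \<equiv> \<lambda>n::nat. sc (complex_of_real (1 / sqrt (\<Prod>i=1..n. Fib (int i)))) ((bp ^^ n) vac)"
    and "H \<equiv> \<lambda>x. sc (complex_of_real (hbar * \<omega> / 2)) (bp (b x) + b (bp x))"
    and "E \<equiv> \<lambda>n::nat. hbar * \<omega> / 2 * Fib (int n + 2)"
  shows "(\<forall>n. N (ket n) = sc (of_nat n) (ket n))
       \<and> (\<forall>n. bp (b (ket n)) = sc (complex_of_real (Fib (int n))) (ket n))
       \<and> (\<forall>n. b (bp (ket n)) = sc (complex_of_real (Fib (int n + 1))) (ket n))
       \<and> (\<forall>m n. ip (ket m) (ket n) = (if m = n then 1 else 0))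
       \<and> (\<forall>n. H (ket n) = sc (complex_of_real (E n)) (ket n))
       \<and> (\<forall>n. E (n + 1) - E n = hbar * \<omega> / 2 * Fib (int n + 1))
       \<and> ((\<lambda>n. E (n + 1) / E n) \<longlonglongrightarrow> phi)"
  proof -
  interpret vs: vector_space sc using inner unfolding complex_inner_space_def by blast
  interpret lb: Vector_Spaces.linear sc sc b by (rule lin_b)
  interpret lbp: Vector_Spaces.linear sc sc bp by (rule lin_bp)
  interpret lN: Vector_Spaces.linear sc sc N by (rule lin_N)
  have ip_sym: "\<And>x y. ip y x = cnj (ip x y)" using inner unfolding complex_inner_space_def by blast
  have ip_lin: "\<And>c x y. ip x (sc c y) = c * ip x y" using inner unfolding complex_inner_space_def by blast
  have ip_sl: "\<And>c x y. ip (sc c x) y = cnj c * ip x y"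
    by (metis ip_sym ip_lin complex_cnj_cnj complex_cnj_mult)
  define v where "v n = (bp^^n) vac" for n
  have vS: "v (Suc n) = bp (v n)" for n by (simp add: v_def)
  have v0: "v 0 = vac" by (simp add: v_def)
  have Nv: "N (v n) = sc (of_nat n) (v n)" for n
  proof (induction n)
    case 0 show ?case using vac_N v0 by simp
  next
    case (Suc n)
    have "N (bp (v n)) = bp (N (v n)) + bp (v n)" using comm_bp[rule_format, of "v n"] by (metis diff_eq_eq add.commute)
    also have "\<dots> = sc (of_nat n) (bp (v n)) + sc 1 (bp (v n))" using Suc lbp.scale by simp
    also have "\<dots> = sc (of_nat (Suc n)) (bp (v n))" by (simp add: vs.scale_left_distrib)
    finally show ?case using vS by simp
  qed
  have Qv: "Q (v n) = sc (complex_of_real (psi^n)) (v n)" for n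
    using Q_eig Nv[of n] unfolding psi_def by (metis of_int_of_nat_eq power_int_of_nat)
  have bb: "bp (b (v n)) = sc (complex_of_real (Fib (int n))) (v n) \<and>
            b (bp (v n)) = sc (complex_of_real (Fib (int n + 1))) (v n)" for n
  proof (induction n)
    case 0
    have 1: "bp (b (v 0)) = sc (complex_of_real (Fib (int 0))) (v 0)"
      using vac_b v0 lbp.zero Fib0 by simp
    moreover have "b (bp (v 0)) = sc (complex_of_real (Fib (int 0 + 1))) (v 0)"
    proof -
      have "b (bp (v 0)) = sc (complex_of_real phi) (bp (b (v 0))) + Q (v 0)" using rel[rule_format, of "v 0"] by (metis diff_eq_eq add.commute)
      also have "\<dots> = sc (complex_of_real (phi * Fib (int 0) + psi^0)) (v 0)"
        using 1 Qv[of 0] Fib0 by simp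
      finally show ?thesis using Fib_step[of 0] by simp
    qed
    ultimately show ?case by blast
  next
    case (Suc n)
    have 1: "bp (b (v (Suc n))) = sc (complex_of_real (Fib (int (Suc n)))) (v (Suc n))"
      using Suc vS lbp.scale by (simp add: add.commute)
    moreover have "b (bp (v (Suc n))) = sc (complex_of_real (Fib (int (Suc n) + 1))) (v (Suc n))"
    proof -
      have "b (bp (v (Suc n))) = sc (complex_of_real phi) (bp (b (v (Suc n)))) + Q (v (Suc n))" using rel[rule_format, of "v (Suc n)"] by (metis diff_eq_eq add.commute)
      also have "\<dots> = sc (complex_of_real (phi * Fib (int (Suc n)) + psi^(Suc n))) (v (Suc n))"
        unfolding 1 Qv vs.scale_scale vs.scale_left_distrib[symmetric] by simp
      finally show ?thesis using Fib_step[of "Suc n"] by simp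
    qed
    ultimately show ?case by blast
  qed
  define P where "P n = (\<Prod>i=1..n. Fib (int i))" for n
  have Ppos: "P n > 0" for n unfolding P_def by (rule prod_pos) (simp add: Fib_pos)
  have PS: "P (Suc n) = Fib (int (Suc n)) * P n" for n unfolding P_def by (simp add: prod.nat_ivl_Suc')
  have nv: "ip (v n) (v n) = complex_of_real (P n)" for n
  proof (induction n)
    case 0 show ?case using vac_norm v0 by (simp add: P_def)
  next
    case (Suc n)
    have "ip (v (Suc n)) (v (Suc n)) = ip (b (bp (v n))) (v n)" using adj vS by simp
    also have "\<dots> = complex_of_real (Fib (int n + 1)) * complex_of_real (P n)"
      using bb[of n] Suc ip_sl by simp
    finally show ?case using PS[of n] by (simp add: add.commute)
  qed
  have orth: "m \<noteq> n \<Longrightarrow> ip (v m) (v n) = 0" for m n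
  proof -
    assume mn: "m \<noteq> n"
    have "ip (N (v m)) (v n) = ip (v m) (N (v n))" using herm by blast
    hence "of_nat m * ip (v m) (v n) = of_nat n * ip (v m) (v n)" unfolding Nv ip_sl ip_lin by simp
    thus ?thesis using mn by simp
  qed
  define c where "c n = complex_of_real (1 / sqrt (P n))" for n
  have ketc: "ket n = sc (c n) (v n)" for n unfolding ket_def c_def v_def P_def by simp
  have cc: "cnj (c n) * c n * complex_of_real (P n) = 1" for n
  proof -
    have "(1 / sqrt (P n)) * (1 / sqrt (P n)) * P n = 1" using Ppos[of n]
      by (simp add: field_simps)
    hence "complex_of_real ((1 / sqrt (P n)) * (1 / sqrt (P n)) * P n) = 1" by simp
    thus ?thesis unfolding c_def by (simp del: of_real_mult add: of_real_mult[symmetric])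
  qed
  have A1: "\<forall>n. N (ket n) = sc (of_nat n) (ket n)"
  proof
    fix n
    have "N (ket n) = sc (c n) (N (v n))" unfolding ketc by (rule lN.scale)
    also have "\<dots> = sc (c n * of_nat n) (v n)" unfolding Nv by (rule vs.scale_scale)
    also have "\<dots> = sc (of_nat n) (ket n)" unfolding ketc vs.scale_scale by (simp only: mult.commute)
    finally show "N (ket n) = sc (of_nat n) (ket n)" .
  qed
  have A2: "\<forall>n. bp (b (ket n)) = sc (complex_of_real (Fib (int n))) (ket n)"
  proof
    fix n
    have "bp (b (ket n)) = sc (c n) (bp (b (v n)))" unfolding ketc lb.scale lbp.scale ..
    also have "\<dots> = sc (c n * complex_of_real (Fib (int n))) (v n)" using bb[of n] vs.scale_scale by simp
    also have "\<dots> = sc (complex_of_real (Fib (int n))) (ket n)" unfolding ketc vs.scale_scale by (simp only: mult.commute)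
    finally show "bp (b (ket n)) = sc (complex_of_real (Fib (int n))) (ket n)" .
  qed
  have A3: "\<forall>n. b (bp (ket n)) = sc (complex_of_real (Fib (int n + 1))) (ket n)"
  proof
    fix n
    have "b (bp (ket n)) = sc (c n) (b (bp (v n)))" unfolding ketc lb.scale lbp.scale ..
    also have "\<dots> = sc (c n * complex_of_real (Fib (int n + 1))) (v n)" using bb[of n] vs.scale_scale by simp
    also have "\<dots> = sc (complex_of_real (Fib (int n + 1))) (ket n)" unfolding ketc vs.scale_scale by (simp only: mult.commute)
    finally show "b (bp (ket n)) = sc (complex_of_real (Fib (int n + 1))) (ket n)" .
  qed
  have A4: "\<forall>m n. ip (ket m) (ket n) = (if m = n then 1 else 0)"
    unfolding ketc using orth nv cc ip_sl ip_lin by (simp add: mult.assoc mult.left_commute)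
  have A5: "\<forall>n. H (ket n) = sc (complex_of_real (E n)) (ket n)"
  proof
    fix n
    have "H (ket n) = sc (complex_of_real (hbar * \<omega> / 2)) (sc (complex_of_real (Fib (int n) + Fib (int n + 1))) (ket n))"
      unfolding H_def A2[rule_format] A3[rule_format] by (simp add: vs.scale_left_distrib)
    also have "\<dots> = sc (complex_of_real (E n)) (ket n)" unfolding E_def vs.scale_scale
      using Fib_rec[of n] by (simp add: algebra_simps)
    finally show "H (ket n) = sc (complex_of_real (E n)) (ket n)" .
  qed
  have F3: "Fib (int n + 3) = Fib (int n + 2) + Fib (int n + 1)" for n
    using Fib_rec[of "Suc n"] by (simp add: ac_simps)
  have A6: "\<forall>n. E (n + 1) - E n = hbar * \<omega> / 2 * Fib (int n + 1)"
    unfolding E_def using F3 by (simp add: algebra_simps)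
  have A7: "(\<lambda>n. E (n + 1) / E n) \<longlonglongrightarrow> phi"
  proof -
    have L: "(\<lambda>n. Fib (int (n+2) + 1) / Fib (int (n+2))) \<longlonglongrightarrow> phi"
      using LIMSEQ_ignore_initial_segment[OF ratio_lim, of 2] by simp
    have h: "hbar * \<omega> / 2 \<noteq> 0" using hbar_pos omega_pos by simp
    have "E (n + 1) / E n = Fib (int (n+2) + 1) / Fib (int (n+2))" for n
      unfolding E_def using h by (simp add: ac_simps)
    thus ?thesis using L by simp
  qed
  show ?thesis using A1 A2 A3 A4 A5 A6 A7 by blast
qed
end
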